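(* Let $(d_1,\ldots,d_n)$ be a tree degree sequence with $n\geq 3$, let $V=\{v_1,\ldots,v_n\}$, and let $X\subseteq V$ be such that (i) $d_i>1$ for every $v_i\in X$, (ii) $|X|\leq n/2$, and (iii) $\sum_{i:v_i\in X}d_i\geq \sum_{i:v_i\in V\setminus X}d_i$. Then there is a tree $T$ with vertex set $V$ such that $d_T(v_i)=d_i$ for every $v_i\in V$ and $X$ is a minimum vertex cover of $T$.
   Context: All graphs are finite, simple and undirected. The degree sequence of a graph is the nonincreasing sequence of its vertex degrees (so $d_1\geq\cdots\geq d_n$). A tree degree sequence is the degree sequence of some tree. $d_T(v)$ denotes the degree of $v$ in $T$. *)

theory Defs
  imports Main
begin

definition simple_graph :: "'a set \<Rightarrow> 'a set set \<Rightarrow> bool" where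
  "simple_graph V E \<longleftrightarrow> finite V \<and> (\<forall>e\<in>E. e \<subseteq> V \<and> card e = 2)"

definition adj :: "'a set set \<Rightarrow> 'a \<Rightarrow> 'a \<Rightarrow> bool" where
  "adj E u v \<longleftrightarrow> {u, v} \<in> E"

definition degree :: "'a set set \<Rightarrow> 'a \<Rightarrow> nat" where
  "degree E v = card {e \<in> E. v \<in> e}"

definition connected_graph :: "'a set \<Rightarrow> 'a set set \<Rightarrow> bool" where
  "connected_graph V E \<longleftrightarrow> (\<forall>u\<in>V. \<forall>v\<in>V. (u, v) \<in> {(x, y). adj E x y}\<^sup>*)"

definition is_cycle :: "'a set set \<Rightarrow> 'a list \<Rightarrow> bool" where
  "is_cycle E xs \<longleftrightarrow> length xs \<ge> 3 \<and> distinct xs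
     \<and> (\<forall>i. Suc i < length xs \<longrightarrow> adj E (xs ! i) (xs ! Suc i))
     \<and> adj E (last xs) (hd xs)"

definition acyclic_graph :: "'a set set \<Rightarrow> bool" where
  "acyclic_graph E \<longleftrightarrow> \<not> (\<exists>xs. is_cycle E xs)"

definition is_tree :: "'a set \<Rightarrow> 'a set set \<Rightarrow> bool" where
  "is_tree V E \<longleftrightarrow> simple_graph V E \<and> V \<noteq> {} \<and> connected_graph V E \<and> acyclic_graph E"

definition vertex_cover :: "'a set \<Rightarrow> 'a set set \<Rightarrow> 'a set \<Rightarrow> bool" where
  "vertex_cover V E X \<longleftrightarrow> X \<subseteq> V \<and> (\<forall>e\<in>E. e \<inter> X \<noteq> {})"

definition min_vertex_cover :: "'a set \<Rightarrow> 'a set set \<Rightarrow> 'a set \<Rightarrow> bool" where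
  "min_vertex_cover V E X \<longleftrightarrow> vertex_cover V E X \<and> (\<forall>Y. vertex_cover V E Y \<longrightarrow> card X \<le> card Y)"

text \<open>(d_1,...,d_n) (as d :: nat => nat on indices 1..n) is a tree degree sequence:
  nonincreasing and the degree sequence of some tree; vertices v_i are identified with i.\<close>
definition tree_degree_seq :: "nat \<Rightarrow> (nat \<Rightarrow> nat) \<Rightarrow> bool" where
  "tree_degree_seq n d \<longleftrightarrow> (\<forall>i j. 1 \<le> i \<and> i \<le> j \<and> j \<le> n \<longrightarrow> d j \<le> d i)
     \<and> (\<exists>E. is_tree {1..n} E \<and> (\<forall>i\<in>{1..n}. degree E i = d i))"

end

theory Submission
  imports Defs
begin



lemma adj_sym: "adj E a b = adj E b a"
  by (simp add: adj_def insert_commute)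

lemma sg_finite_E: "simple_graph V E \<Longrightarrow> finite E"
  unfolding simple_graph_def by (meson Pow_iff finite_Pow_iff finite_subset subsetI)

lemma degree_insert:
  assumes "finite E" "f \<notin> E"
  shows "degree (insert f E) z = degree E z + (if z \<in> f then 1 else 0)"
proof (cases "z \<in> f")
  case True
  then have "{e \<in> insert f E. z \<in> e} = insert f {e \<in> E. z \<in> e}" by auto
  then show ?thesis using True assms by (simp add: degree_def)
next
  case False
  then have "{e \<in> insert f E. z \<in> e} = {e \<in> E. z \<in> e}" by auto
  then show ?thesis using False by (simp add: degree_def)
qed

lemma dist_eq: "distinct xs \<Longrightarrow> i < length xs \<Longrightarrow> j < length xs \<Longrightarrow> xs!i = xs!j \<Longrightarrow> i = j"
  by (simp add: nth_eq_iff_index_eq)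

lemma tree_single: "is_tree {a} {}"
  unfolding is_tree_def simple_graph_def connected_graph_def acyclic_graph_def is_cycle_def
  by (auto simp: adj_def)

lemma cycle_mono: "is_cycle E xs \<Longrightarrow> E \<subseteq> E' \<Longrightarrow> is_cycle E' xs"
  unfolding is_cycle_def adj_def by blast

lemma add_leaf:
  assumes T: "is_tree V E" and u: "u \<in> V" and v: "v \<notin> V"
  shows "is_tree (insert v V) (insert {u,v} E)"
proof -
  let ?E = "insert {u,v} E"
  have sg: "simple_graph V E" and conn: "connected_graph V E" and ac: "acyclic_graph E"
    using T by (auto simp: is_tree_def)
  have uv: "u \<noteq> v" using u v by auto
  have Esub: "\<forall>e\<in>E. e \<subseteq> V" using sg by (auto simp: simple_graph_def)
  have sg2: "simple_graph (insert v V) ?E"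
    using sg u uv unfolding simple_graph_def by auto
  have N: "b = u" if "adj ?E v b" for b
  proof -
    have "{v,b} \<in> ?E" using that by (simp add: adj_def)
    moreover have "{v,b} \<notin> E" using Esub v by auto
    ultimately have "{v,b} = {u,v}" by auto
    then show ?thesis using uv by (auto simp: doubleton_eq_iff)
  qed
  have N2: "b = u" if "adj ?E b v" for b using N that adj_sym by metis
  have ac2: "acyclic_graph ?E"
    unfolding acyclic_graph_def
  proof
    assume "\<exists>xs. is_cycle ?E xs"
    then obtain xs where C: "is_cycle ?E xs" by blast
    let ?L = "length xs"
    have L3: "?L \<ge> 3" and dist: "distinct xs"
      and cons: "\<And>i. Suc i < ?L \<Longrightarrow> adj ?E (xs ! i) (xs ! Suc i)"
      and wrap: "adj ?E (last xs) (hd xs)" using C by (auto simp: is_cycle_def)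
    have ne: "xs \<noteq> []" using L3 by auto
    have lst: "last xs = xs ! (?L - 1)" using ne by (simp add: last_conv_nth)
    have hd: "hd xs = xs ! 0" using ne by (simp add: hd_conv_nth)
    show False
    proof (cases "v \<in> set xs")
      case False
      have red: "adj E a b" if "adj ?E a b" "a \<in> set xs" "b \<in> set xs" for a b
        using that False by (auto simp: adj_def doubleton_eq_iff)
      have "is_cycle E xs"
        unfolding is_cycle_def
      proof (intro conjI allI impI)
        show "3 \<le> ?L" using L3 .
        show "distinct xs" using dist .
        fix i assume "Suc i < ?L"
        then show "adj E (xs ! i) (xs ! Suc i)" using cons red by simp
      next
        show "adj E (last xs) (hd xs)" using wrap red ne by simp
      qed
      then show False using ac by (auto simp: acyclic_graph_def)
    next
      case True
      then obtain i where i: "i < ?L" "xs ! i = v" by (auto simp: in_set_conv_nth)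
      show False
      proof (cases "i = 0")
        case True
        have "xs ! 1 = u" using N cons[of 0] i True L3 by simp
        moreover have "xs ! (?L - 1) = u" using N2 wrap lst hd i True by simp
        ultimately have "1 = ?L - 1" using dist_eq[OF dist, of 1 "?L - 1"] L3 by simp
        then show False using L3 by simp
      next
        case False
        have a: "xs ! (i - 1) = u" using N2 cons[of "i-1"] i False by simp
        show False
        proof (cases "i = ?L - 1")
          case True
          have "xs ! 0 = u" using N wrap lst hd i True by simp
          then have "i - 1 = 0" using a dist_eq[OF dist, of "i - 1" 0] i by force
          then show False using L3 True by simp
        next
          case False2: False
          have "xs ! (i+1) = u" using N cons[of i] i False2 by simp
          then have "i - 1 = i + 1" using a dist_eq[OF dist, of "i - 1" "i+1"] i False2 by simp
          then show False by simp
        qed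
      qed
    qed
  qed
  let ?R = "{(x, y). adj E x y}" and ?R2 = "{(x, y). adj ?E x y}"
  have mono: "?R\<^sup>* \<subseteq> ?R2\<^sup>*" by (rule rtrancl_mono) (auto simp: adj_def)
  have s1: "(u, v) \<in> ?R2" and s2: "(v, u) \<in> ?R2" by (auto simp: adj_def insert_commute)
  have conn2: "connected_graph (insert v V) ?E"
    unfolding connected_graph_def
  proof (intro ballI)
    fix a b assume a: "a \<in> insert v V" and b: "b \<in> insert v V"
    have V: "\<And>a b. a \<in> V \<Longrightarrow> b \<in> V \<Longrightarrow> (a, b) \<in> ?R2\<^sup>*"
      using conn mono unfolding connected_graph_def by blast
    show "(a, b) \<in> ?R2\<^sup>*"
    proof (cases "a = v")
      case True
      show ?thesis
      proof (cases "b = v")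
        case True then show ?thesis using \<open>a = v\<close> by simp
      next
        case False
        then have "(u, b) \<in> ?R2\<^sup>*" using V u b by auto
        then show ?thesis using s2 True by (meson converse_rtrancl_into_rtrancl)
      qed
    next
      case False
      then have aV: "a \<in> V" using a by auto
      show ?thesis
      proof (cases "b = v")
        case True
        have "(a, u) \<in> ?R2\<^sup>*" using V u aV by auto
        then show ?thesis using s1 True by (meson rtrancl_into_rtrancl)
      next
        case False then show ?thesis using V aV b by auto
      qed
    qed
  qed
  show ?thesis using sg2 ac2 conn2 by (simp add: is_tree_def)
qed




lemma leaf_exists:
  assumes sg: "simple_graph V E" and ac: "acyclic_graph E" and ne: "E \<noteq> {}"
  shows "\<exists>z p. p \<noteq> z \<and> {p,z} \<in> E \<and> (\<forall>e\<in>E. z \<in> e \<longrightarrow> e = {p,z})"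
proof -
  have fin: "finite V" using sg by (simp add: simple_graph_def)
  have Esub: "\<And>e. e \<in> E \<Longrightarrow> e \<subseteq> V \<and> card e = 2" using sg by (simp add: simple_graph_def)
  define P where "P = {xs. set xs \<subseteq> V \<and> distinct xs \<and> (\<forall>i. Suc i < length xs \<longrightarrow> adj E (xs!i) (xs!Suc i))}"
  have finP: "finite P" unfolding P_def
    by (rule finite_subset[OF _ finite_subset_distinct[OF fin]]) auto
  obtain e0 where e0: "e0 \<in> E" using ne by auto
  then obtain a b where ab: "e0 = {a,b}" "a \<noteq> b" using Esub[OF e0] by (auto simp: card_2_iff)
  have "[a,b] \<in> P" using ab e0 Esub[OF e0] unfolding P_def by (auto simp: adj_def nth_Cons split: nat.splits)
  then have Pne: "P \<noteq> {}" by auto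
  define L where "L = Max (length ` P)"
  have "L \<in> length ` P" unfolding L_def using finP Pne by simp
  then obtain xs where xs: "xs \<in> P" "length xs = L" by auto
  have maxL: "\<And>ys. ys \<in> P \<Longrightarrow> length ys \<le> L" unfolding L_def using finP by simp
  have L2: "L \<ge> 2" using maxL[OF \<open>[a,b] \<in> P\<close>] by simp
  have dist: "distinct xs" and sV: "set xs \<subseteq> V"
    and cons: "\<And>i. Suc i < L \<Longrightarrow> adj E (xs!i) (xs!Suc i)" using xs by (auto simp: P_def)
  define z where "z = xs ! (L - 1)"
  define p where "p = xs ! (L - 2)"
  have pz: "adj E p z"
  proof -
    have "Suc (L-2) = L - 1" "Suc (L-2) < L" using L2 by auto
    then show ?thesis using cons[of "L-2"] unfolding p_def z_def by simp
  qed
  have pnz: "p \<noteq> z" unfolding p_def z_def using dist_eq[OF dist, of "L-2" "L-1"] xs L2 by auto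
  have ne_xs: "xs \<noteq> []" using L2 xs by auto
  have lastz: "last xs = z" using ne_xs xs by (simp add: last_conv_nth z_def)
  have main: "e = {p,z}" if e: "e \<in> E" "z \<in> e" for e
  proof -
    obtain w where w: "e = {z,w}" "w \<noteq> z" using Esub[OF e(1)] e(2)
      by (auto simp: card_2_iff)
    have wV: "w \<in> V" using Esub[OF e(1)] w by auto
    have adjzw: "adj E z w" using e w by (simp add: adj_def)
    show ?thesis
    proof (cases "w \<in> set xs")
      case False
      have "xs @ [w] \<in> P" unfolding P_def
      proof (intro CollectI conjI allI impI)
        show "set (xs @ [w]) \<subseteq> V" using sV wV by auto
        show "distinct (xs @ [w])" using dist False by simp
        fix i assume i: "Suc i < length (xs @ [w])"
        show "adj E ((xs @ [w]) ! i) ((xs @ [w]) ! Suc i)"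
        proof (cases "Suc i < L")
          case True then show ?thesis using cons xs by (simp add: nth_append)
        next
          case False
          then have "Suc i = L" using i xs by simp
          then have "i = L - 1" by simp
          then show ?thesis using adjzw xs z_def \<open>Suc i = L\<close> by (simp add: nth_append)
        qed
      qed
      then show ?thesis using maxL xs by fastforce
    next
      case True
      then obtain j where j: "j < L" "xs ! j = w" using xs by (auto simp: in_set_conv_nth)
      have jn: "j \<noteq> L - 1" using j w z_def by auto
      show ?thesis
      proof (cases "j = L - 2")
        case True then show ?thesis using w j p_def by auto
      next
        case False
        have jl: "j + 3 \<le> L" using jn False j by linarith
        let ?ys = "drop j xs"
        have "is_cycle E ?ys" unfolding is_cycle_def
        proof (intro conjI allI impI)
          show "3 \<le> length ?ys" using jl xs by simp
          show "distinct ?ys" using dist by simp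
          fix i assume "Suc i < length ?ys"
          then show "adj E (?ys ! i) (?ys ! Suc i)" using cons[of "j+i"] xs by simp
        next
          have "last ?ys = z" using lastz j xs by simp
          moreover have "hd ?ys = w" using j xs by (simp add: hd_drop_conv_nth)
          ultimately show "adj E (last ?ys) (hd ?ys)" using adjzw by simp
        qed
        then show ?thesis using ac by (auto simp: acyclic_graph_def)
      qed
    qed
  qed
  show ?thesis using pnz pz main by (auto simp: adj_def)
qed




lemma tree_sub: "is_tree V E \<Longrightarrow> e \<in> E \<Longrightarrow> e \<subseteq> V"
  by (auto simp: is_tree_def simple_graph_def)

lemma tree_has_edge:
  assumes T: "is_tree V E" and c: "card V \<ge> 2" and v: "v \<in> V"
  shows "\<exists>e\<in>E. v \<in> e"
proof -
  have fin: "finite V" using T by (simp add: is_tree_def simple_graph_def)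
  obtain w where w: "w \<in> V" "w \<noteq> v"
  proof -
    have "\<not> V \<subseteq> {v}"
    proof
      assume "V \<subseteq> {v}"
      then have "card V \<le> card {v}" by (rule card_mono[rotated]) simp
      then show False using c by simp
    qed
    then show ?thesis using that by auto
  qed
  have "(v, w) \<in> {(x, y). adj E x y}\<^sup>*" using T v w by (auto simp: is_tree_def connected_graph_def)
  then obtain y where "adj E v y" using w(2) by (cases rule: converse_rtranclE) auto
  then show ?thesis by (auto simp: adj_def)
qed

lemma degree_pos:
  assumes T: "is_tree V E" and c: "card V \<ge> 2" and v: "v \<in> V"
  shows "degree E v \<ge> 1"
proof -
  have fE: "finite E" using T sg_finite_E by (auto simp: is_tree_def)
  obtain e where "e \<in> E" "v \<in> e" using tree_has_edge[OF assms] by auto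
  then have "{e \<in> E. v \<in> e} \<noteq> {}" by auto
  then show ?thesis using fE by (simp add: degree_def Suc_le_eq card_gt_0_iff)
qed

lemma tree_decomp:
  assumes T: "is_tree V E" and c: "card V \<ge> 2"
  shows "\<exists>z p E'. z \<in> V \<and> p \<in> V - {z} \<and> E = insert {p,z} E' \<and> {p,z} \<notin> E' \<and> is_tree (V - {z}) E'"
proof -
  have sg: "simple_graph V E" and conn: "connected_graph V E" and ac: "acyclic_graph E"
    using T by (auto simp: is_tree_def)
  have "V \<noteq> {}" using c by (intro notI) simp
  then obtain v where "v \<in> V" by blast
  then have "E \<noteq> {}" using tree_has_edge[OF T c] by auto
  then obtain z p where zp: "p \<noteq> z" "{p,z} \<in> E" "\<forall>e\<in>E. z \<in> e \<longrightarrow> e = {p,z}"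
    using leaf_exists[OF sg ac] by blast
  have Esub: "\<And>e. e \<in> E \<Longrightarrow> e \<subseteq> V \<and> card e = 2" using sg by (simp add: simple_graph_def)
  have zV: "z \<in> V" and pV: "p \<in> V" using Esub[OF zp(2)] by auto
  define E' where "E' = E - {{p,z}}"
  have E'z: "\<And>e. e \<in> E' \<Longrightarrow> z \<notin> e" using zp(3) by (auto simp: E'_def)
  have sg': "simple_graph (V - {z}) E'" unfolding simple_graph_def
  proof (intro conjI ballI)
    show "finite (V - {z})" using sg by (simp add: simple_graph_def)
    fix e assume e: "e \<in> E'"
    then have "e \<in> E" by (simp add: E'_def)
    then show "e \<subseteq> V - {z}" "card e = 2" using Esub E'z[OF e] by auto
  qed
  have ac': "acyclic_graph E'" unfolding acyclic_graph_def
  proof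
    assume "\<exists>xs. is_cycle E' xs"
    then obtain xs where "is_cycle E' xs" by blast
    then have "is_cycle E xs" by (rule cycle_mono) (auto simp: E'_def)
    then show False using ac by (auto simp: acyclic_graph_def)
  qed
  let ?R = "{(x, y). adj E x y}" and ?R' = "{(x, y). adj E' x y}"
  have key: "(c \<noteq> z \<longrightarrow> (a, c) \<in> ?R'\<^sup>*) \<and> (c = z \<longrightarrow> (a, p) \<in> ?R'\<^sup>*)"
    if "(a, c) \<in> ?R\<^sup>*" "a \<noteq> z" for a c
    using that(1)
  proof (induction rule: rtrancl_induct)
    case base then show ?case using that(2) by simp
  next
    case (step c b)
    have cb: "{c,b} \<in> E" using step(2) by (simp add: adj_def)
    show ?case
    proof (cases "c = z")
      case True
      then have "{c,b} = {p,z}" using zp(3) cb by auto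
      then have "b = p" using True zp(1) by (auto simp: doubleton_eq_iff)
      then show ?thesis using step(3) True zp(1) by auto
    next
      case False
      show ?thesis
      proof (cases "b = z")
        case True
        then have "{c,b} = {p,z}" using zp(3) cb by auto
        then have "c = p" using True False by (auto simp: doubleton_eq_iff)
        then show ?thesis using step(3) True False by auto
      next
        case False2: False
        have "{c,b} \<in> E'" using cb False False2 by (auto simp: E'_def doubleton_eq_iff)
        then have "(c, b) \<in> ?R'" by (simp add: adj_def)
        then show ?thesis using step(3) False False2 by (meson rtrancl_into_rtrancl)
      qed
    qed
  qed
  have conn': "connected_graph (V - {z}) E'"
    unfolding connected_graph_def
  proof (intro ballI)
    fix a b assume a: "a \<in> V - {z}" and b: "b \<in> V - {z}"
    then have "(a, b) \<in> ?R\<^sup>*" using conn by (auto simp: connected_graph_def)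
    then show "(a, b) \<in> ?R'\<^sup>*" using key a b by blast
  qed
  have "V - {z} \<noteq> {}" using pV zp(1) by blast
  then have t': "is_tree (V - {z}) E'" using sg' ac' conn' by (simp add: is_tree_def)
  have e1: "E = insert {p,z} E'" using zp(2) unfolding E'_def by blast
  have e2: "{p,z} \<notin> E'" unfolding E'_def by blast
  have e3: "p \<in> V - {z}" using pV zp(1) by blast
  show ?thesis using zV e1 e2 e3 t' by blast
qed

lemma tree_degree_sum:
  "is_tree V E \<Longrightarrow> sum (degree E) V + 2 = 2 * card V"
proof (induction "card V" arbitrary: V E rule: less_induct)
  case less
  have fin: "finite V" and ne: "V \<noteq> {}" using less.prems by (auto simp: is_tree_def simple_graph_def)
  show ?case
  proof (cases "card V \<ge> 2")
    case False
    moreover have "card V > 0" using fin ne by (simp add: card_gt_0_iff)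
    ultimately have "card V = 1" by linarith
    then obtain a where a: "V = {a}" by (auto simp: card_Suc_eq)
    have "E = {}"
    proof (rule ccontr)
      assume "E \<noteq> {}"
      then obtain e where "e \<in> E" by auto
      then have "e \<subseteq> {a}" "card e = 2" using less.prems a by (auto simp: is_tree_def simple_graph_def)
      then have "card e \<le> 1" using card_mono[of "{a}" e] by simp
      then show False using \<open>card e = 2\<close> by simp
    qed
    then show ?thesis using a by (simp add: degree_def)
  next
    case True
    obtain z p E' where d: "z \<in> V" "p \<in> V - {z}" "E = insert {p,z} E'" "{p,z} \<notin> E'" "is_tree (V - {z}) E'"
      using tree_decomp[OF less.prems True] by blast
    have fE': "finite E'" using d(5) sg_finite_E by (auto simp: is_tree_def)
    have IH: "sum (degree E') (V - {z}) + 2 = 2 * card (V - {z})"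
      using less.hyps[OF _ d(5)] fin d(1) by (meson card_Diff1_less)
    have dz: "degree E z = 1"
    proof -
      have "{e \<in> E'. z \<in> e} = {}" using tree_sub[OF d(5)] by blast
      then have "degree E' z = 0" unfolding degree_def by (metis card.empty)
      then show ?thesis using degree_insert[OF fE' d(4)] d(3) by simp
    qed
    have "sum (degree E) (V - {z}) = sum (\<lambda>v. degree E' v + (if v \<in> {p,z} then 1 else 0)) (V - {z})"
      using degree_insert[OF fE' d(4)] d(3) by simp
    also have "\<dots> = sum (degree E') (V - {z}) + sum (\<lambda>v. if v \<in> {p,z} then 1 else 0) (V - {z})"
      by (simp add: sum.distrib)
    also have "sum (\<lambda>v. if v \<in> {p,z} then 1 else (0::nat)) (V - {z}) = sum (\<lambda>v. if v = p then 1 else 0) (V - {z})"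
      by (rule sum.cong) auto
    also have "\<dots> = 1" using d(2) fin by (simp add: sum.delta)
    finally have "sum (degree E) (V - {z}) = sum (degree E') (V - {z}) + 1" .
    moreover have "sum (degree E) V = sum (degree E) (V - {z}) + degree E z"
      using fin d(1) by (simp add: sum.remove)
    moreover have "card V = card (V - {z}) + 1" using fin d(1) True by simp
    ultimately show ?thesis using IH dz by simp
  qed
qed




definition good :: "nat set \<Rightarrow> nat set \<Rightarrow> (nat \<Rightarrow> nat) \<Rightarrow> nat set set \<Rightarrow> (nat \<Rightarrow> nat) \<Rightarrow> bool" where
  "good V X d E f \<longleftrightarrow> is_tree V E \<and> X \<subseteq> V \<and> (\<forall>v\<in>V. degree E v = d v) \<and> (\<forall>e\<in>E. e \<inter> X \<noteq> {})
     \<and> inj_on f X \<and> (\<forall>x\<in>X. f x \<in> V - X \<and> {x, f x} \<in> E)"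

lemma good_cong: "good V X d E f \<Longrightarrow> (\<And>v. v \<in> V \<Longrightarrow> d v = d2 v) \<Longrightarrow> good V X d2 E f"
  unfolding good_def by auto

lemma tree_fin: "is_tree V E \<Longrightarrow> finite E"
  using sg_finite_E by (auto simp: is_tree_def)


lemma deg_out: "is_tree V E \<Longrightarrow> y \<notin> V \<Longrightarrow> degree E y = 0"
proof -
  assume T: "is_tree V E" and y: "y \<notin> V"
  have "{e \<in> E. y \<in> e} = {}" using tree_sub[OF T] y by blast
  then show ?thesis unfolding degree_def by (metis card.empty)
qed

lemma ext_leaf:
  assumes G: "good V X d E f" and x: "x \<in> X" and y: "y \<notin> V"
  shows "good (insert y V) X (d(x := d x + 1, y := 1)) (insert {x,y} E) f"
proof -
  have T: "is_tree V E" and XV: "X \<subseteq> V" and deg: "\<forall>v\<in>V. degree E v = d v"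
    and cov: "\<forall>e\<in>E. e \<inter> X \<noteq> {}" and inj: "inj_on f X" and fm: "\<forall>x\<in>X. f x \<in> V - X \<and> {x, f x} \<in> E"
    using G by (auto simp: good_def)
  have xV: "x \<in> V" using x XV by auto
  have nin: "{x,y} \<notin> E" using tree_sub[OF T] y by auto
  have dy: "degree E y = 0" using deg_out[OF T] y by simp
  have T2: "is_tree (insert y V) (insert {x,y} E)" using add_leaf[OF T xV y] .
  have deg2: "\<forall>v\<in>insert y V. degree (insert {x,y} E) v = (d(x := d x + 1, y := 1)) v"
    using degree_insert[OF tree_fin[OF T] nin] deg dy xV y by auto
  show ?thesis unfolding good_def using T2 XV deg2 cov inj fm x y by auto
qed

lemma ext_pair:
  assumes G: "good V X d E f" and w: "w \<in> V" and x: "x \<notin> V" and y: "y \<notin> V" and xy: "x \<noteq> y"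
  shows "good (insert y (insert x V)) (insert x X) (d(w := d w + 1, x := 2, y := 1))
           (insert {x,y} (insert {w,x} E)) (f(x := y))"
proof -
  have T: "is_tree V E" and XV: "X \<subseteq> V" and deg: "\<forall>v\<in>V. degree E v = d v"
    and cov: "\<forall>e\<in>E. e \<inter> X \<noteq> {}" and inj: "inj_on f X" and fm: "\<forall>x\<in>X. f x \<in> V - X \<and> {x, f x} \<in> E"
    using G by (auto simp: good_def)
  have nin: "{w,x} \<notin> E" using tree_sub[OF T] x by auto
  have T1: "is_tree (insert x V) (insert {w,x} E)" using add_leaf[OF T w x] .
  have yV1: "y \<notin> insert x V" using y xy by auto
  have nin2: "{x,y} \<notin> insert {w,x} E" using tree_sub[OF T1] yV1 by auto
  have T2: "is_tree (insert y (insert x V)) (insert {x,y} (insert {w,x} E))" using add_leaf[OF T1 _ yV1] by simp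
  have dx: "degree E x = 0" using deg_out[OF T] x by simp
  have dy: "degree E y = 0" using deg_out[OF T] y by simp
  have wx: "w \<noteq> x" "w \<noteq> y" using w x y by auto
  have deg2: "\<forall>v\<in>insert y (insert x V). degree (insert {x,y} (insert {w,x} E)) v = (d(w := d w + 1, x := 2, y := 1)) v"
    using degree_insert[OF _ nin2] degree_insert[OF tree_fin[OF T] nin] tree_fin[OF T] deg dx dy wx xy w x y
    by auto
  have fX: "f ` X \<subseteq> V" using fm by auto
  have inj2: "inj_on (f(x := y)) (insert x X)"
    using inj fX y x XV by (auto simp: inj_on_def)
  have fm2: "\<forall>z\<in>insert x X. (f(x := y)) z \<in> insert y (insert x V) - insert x X \<and> {z, (f(x := y)) z} \<in> insert {x,y} (insert {w,x} E)"
    using fm x y xy XV by auto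
  show ?thesis unfolding good_def using T2 XV deg2 cov inj2 fm2 x by auto
qed




lemma sum_upd_in: "finite A \<Longrightarrow> a \<in> A \<Longrightarrow> sum (f(a:=c)) A + f a = sum f A + (c::nat)"
proof -
  assume A: "finite A" "a \<in> A"
  have "sum (f(a:=c)) A = c + sum (f(a:=c)) (A - {a})" using A by (simp add: sum.remove)
  moreover have "sum (f(a:=c)) (A - {a}) = sum f (A - {a})" by (rule sum.cong) auto
  moreover have "sum f A = f a + sum f (A - {a})" using A by (simp add: sum.remove)
  ultimately show ?thesis by simp
qed

lemma sum_upd_out: "a \<notin> A \<Longrightarrow> sum (f(a:=c)) A = sum f A"
  by (rule sum.cong) auto

lemma card_rm: "finite A \<Longrightarrow> a \<in> A \<Longrightarrow> card (A - {a}) + 1 = card A"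
  by (metis Suc_eq_plus1 card_Suc_Diff1)

lemma base2:
  assumes "V = {x, z}" "x \<noteq> z" "X = {x}" "d x = 1" "d z = 1"
  shows "\<exists>E f. good V X d E f"
proof -
  have T: "is_tree {x,z} {{x,z}}" using add_leaf[OF tree_single[of x], of x z] assms(2) by (simp add: insert_commute)
  have deg: "degree {{x,z}} v = 1" if "v \<in> {x,z}" for v
  proof -
    have "{e \<in> {{x,z}}. v \<in> e} = {{x,z}}" using that by auto
    then show ?thesis by (simp add: degree_def)
  qed
  have "good V X d {{x,z}} (\<lambda>_. z)" unfolding good_def using T deg assms by auto
  then show ?thesis by blast
qed

lemma main:
  "finite V \<Longrightarrow> X \<subseteq> V \<Longrightarrow> (\<forall>v\<in>V. d v \<ge> 1) \<Longrightarrow> (\<forall>x\<in>X. d x \<ge> 2 \<or> card V = 2)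
   \<Longrightarrow> card X \<le> card (V - X) \<Longrightarrow> sum d (V - X) \<le> sum d X \<Longrightarrow> sum d V + 2 = 2 * card V
   \<Longrightarrow> \<exists>E f. good V X d E f"
proof (induction "card V" arbitrary: V X d rule: less_induct)
  case less
  note fin = less.prems(1) and XV = less.prems(2) and d1 = less.prems(3) and d2 = less.prems(4)
    and kc = less.prems(5) and sc = less.prems(6) and tot = less.prems(7)
  define Y where "Y = V - X"
  define n where "n = card V"
  define k where "k = card X"
  define m where "m = card Y"
  define SX where "SX = sum d X"
  define SY where "SY = sum d Y"
  have finX: "finite X" using fin XV finite_subset by blast
  have finY: "finite Y" using fin Y_def by simp
  have nkm: "n = k + m"
  proof -
    have "card (V - X) = card V - card X" by (rule card_Diff_subset[OF finX XV])
    moreover have "card X \<le> card V" by (rule card_mono[OF fin XV])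
    ultimately show ?thesis unfolding n_def k_def m_def Y_def by simp
  qed
  have Ssum: "sum d V = SX + SY" unfolding SX_def SY_def Y_def
    using sum.subset_diff[OF XV fin] by (simp add: add.commute)
  have tot': "SX + SY + 2 = 2 * n" using tot Ssum n_def by simp
  have kc': "k \<le> m" using kc k_def m_def Y_def by simp
  have sc': "SY \<le> SX" using sc SX_def SY_def Y_def by simp
  have SYm: "SY \<ge> m" unfolding SY_def m_def
  proof -
    have "sum (\<lambda>_. 1::nat) Y \<le> sum d Y" using d1 Y_def by (intro sum_mono) auto
    then show "card Y \<le> sum d Y" by simp
  qed
  have SXk1: "SX \<ge> k" unfolding SX_def k_def
  proof -
    have "sum (\<lambda>_. 1::nat) X \<le> sum d X" using d1 XV by (intro sum_mono) auto
    then show "card X \<le> sum d X" by simp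
  qed
  have n2: "n \<ge> 2" using tot' SYm SXk1 nkm by linarith
  show ?case
  proof (cases "n = 2")
    case True
    have "SX \<ge> 1" using tot' sc' True by linarith
    then have Xne: "X \<noteq> {}" unfolding SX_def by auto
    then have "k > 0" using finX by (simp add: k_def card_gt_0_iff)
    then have k1: "k = 1" using kc' nkm True by linarith
    have "card X = 1" using k1 by (simp add: k_def)
    then obtain x where Xx: "X = {x}" by (meson card_1_singletonE)
    have m1: "m = 1" using k1 nkm True by simp
    have "card Y = 1" using m1 by (simp add: m_def)
    then obtain z where Yz: "Y = {z}" by (meson card_1_singletonE)
    have "V = X \<union> Y" using XV Y_def by blast
    then have V: "V = {x, z}" using Xx Yz by auto
    have xz: "x \<noteq> z" using Xx Yz Y_def by blast
    have "sum d V = d x + d z" using V xz by simp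
    moreover have "card V = 2" using True n_def by simp
    ultimately have "d x + d z = 2" using tot by simp
    moreover have "d x \<ge> 1" "d z \<ge> 1" using d1 V by auto
    ultimately have "d x = 1" "d z = 1" by auto
    then show ?thesis using base2[OF V xz Xx] by blast
  next
    case False
    then have n3: "n \<ge> 3" using n2 by simp
    have dX: "\<And>x. x \<in> X \<Longrightarrow> d x \<ge> 2"
    proof -
      fix x assume "x \<in> X"
      then have "d x \<ge> 2 \<or> card V = 2" using d2 by blast
      then show "d x \<ge> 2" using n3 n_def by simp
    qed
    have SXk: "SX \<ge> 2 * k" unfolding SX_def k_def
    proof -
      have "sum (\<lambda>_. 2::nat) X \<le> sum d X" using dX by (intro sum_mono) auto
      then show "2 * card X \<le> sum d X" by simp
    qed
    have "\<exists>y\<in>Y. d y = 1"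
    proof (rule ccontr)
      assume A: "\<not> (\<exists>y\<in>Y. d y = 1)"
      have "\<forall>y\<in>Y. d y \<ge> 2"
      proof
        fix y assume "y \<in> Y"
        then have "d y \<ge> 1" "d y \<noteq> 1" using d1 A Y_def by auto
        then show "d y \<ge> 2" by linarith
      qed
      then have "sum (\<lambda>_. 2::nat) Y \<le> sum d Y" by (intro sum_mono) auto
      then have "SY \<ge> 2 * m" unfolding SY_def m_def by simp
      then show False using tot' SXk nkm by linarith
    qed
    then obtain y where y: "y \<in> Y" "d y = 1" by blast
    have yV: "y \<in> V" "y \<notin> X" using y Y_def by auto
    have SYsplit: "SY = sum d (Y - {y}) + 1" unfolding SY_def using finY y by (simp add: sum.remove)
    have cardY': "card (Y - {y}) + 1 = m" using card_rm[OF finY y(1)] m_def by simp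
    have case1: "\<exists>E f. good V X d E f" if x: "x \<in> X" "d x \<ge> 3 \<or> n = 3" "k < m" for x
    proof -
      define V' where "V' = V - {y}"
      define d' where "d' = d(x := d x - 1)"
      have xV: "x \<in> V" using x XV by auto
      have xy: "x \<noteq> y" using x yV by auto
      have dx2: "d x \<ge> 2" using dX x by simp
      have cV': "card V' + 1 = n" using card_rm[OF fin yV(1)] n_def V'_def by simp
      have h1: "finite V'" using fin V'_def by simp
      have h2: "X \<subseteq> V'" using XV yV V'_def by auto
      have h3: "\<forall>v\<in>V'. d' v \<ge> 1" using d1 dx2 V'_def d'_def by auto
      have h4: "\<forall>z\<in>X. d' z \<ge> 2 \<or> card V' = 2" using dX x cV' d'_def by auto
      have YV': "V' - X = Y - {y}" using V'_def Y_def by auto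
      have h5: "card X \<le> card (V' - X)" using YV' cardY' x(3) k_def by simp
      have sY': "sum d' (V' - X) = sum d (Y - {y})" unfolding YV' d'_def
        by (rule sum_upd_out) (use x Y_def in auto)
      have sX': "sum d' X + d x = SX + (d x - 1)" unfolding d'_def SX_def by (rule sum_upd_in[OF finX x(1)])
      have h6: "sum d' (V' - X) \<le> sum d' X" using sY' sX' SYsplit sc' dx2 by linarith
      have sV'0: "sum d V = sum d V' + 1" using fin yV y V'_def by (simp add: sum.remove)
      have sV': "sum d' V' + d x = sum d V' + (d x - 1)" unfolding d'_def
        by (rule sum_upd_in[OF h1]) (use xV xy V'_def in auto)
      have h7: "sum d' V' + 2 = 2 * card V'" using sV' sV'0 tot n_def cV' dx2 by linarith
      have "card V' < card V" using cV' n_def by simp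
      from less.hyps[OF this h1 h2 h3 h4 h5 h6 h7] obtain E f where G: "good V' X d' E f" by blast
      have yV': "y \<notin> V'" using V'_def by simp
      have G2: "good (insert y V') X (d'(x := d' x + 1, y := 1)) (insert {x,y} E) f"
        using ext_leaf[OF G x(1) yV'] .
      have "insert y V' = V" using yV V'_def by auto
      moreover have "\<And>v. v \<in> V \<Longrightarrow> (d'(x := d' x + 1, y := 1)) v = d v"
        using y dx2 xy d'_def by auto
      ultimately show ?thesis using good_cong[OF G2] by metis
    qed
    have caseP: "\<exists>E f. good V X d E f"
      if x: "x \<in> X" "d x = 2" and w: "w \<in> V" "w \<noteq> x" "w \<noteq> y" "d w \<ge> 2"
        and wX: "w \<in> X \<Longrightarrow> (d w \<ge> 3 \<or> n = 4) \<and> SY + 2 \<le> SX" for x w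
    proof -
      define V' where "V' = V - {x, y}"
      define X' where "X' = X - {x}"
      define d' where "d' = d(w := d w - 1)"
      have xV: "x \<in> V" using x XV by auto
      have xy: "x \<noteq> y" using x yV by auto
      have sub: "{x,y} \<subseteq> V" using xV yV by auto
      have c2: "card {x,y} = 2" using xy by simp
      have cV': "card V' + 2 = n" using card_Diff_subset[OF _ sub] card_mono[OF fin sub] c2 n_def V'_def by simp
      have h1: "finite V'" using fin V'_def by simp
      have h2: "X' \<subseteq> V'" using XV yV V'_def X'_def by auto
      have wV': "w \<in> V'" using w V'_def by auto
      have h3: "\<forall>v\<in>V'. d' v \<ge> 1" using d1 w V'_def d'_def by auto
      have h4: "\<forall>z\<in>X'. d' z \<ge> 2 \<or> card V' = 2" using dX wX cV' d'_def X'_def by auto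
      have YV': "V' - X' = Y - {y}" using V'_def Y_def X'_def x by auto
      have cX': "card X' + 1 = k" using card_rm[OF finX x(1)] X'_def k_def by simp
      have h5: "card X' \<le> card (V' - X')" using YV' cardY' kc' cX' by simp
      have sXx: "sum d X = sum d X' + 2" using finX x X'_def by (simp add: sum.remove)
      have h6: "sum d' (V' - X') \<le> sum d' X'"
      proof (cases "w \<in> X")
        case True
        have sY': "sum d' (V' - X') = sum d (Y - {y})" unfolding YV' d'_def
          by (rule sum_upd_out) (use True Y_def in auto)
        have sX': "sum d' X' + d w = sum d X' + (d w - 1)" unfolding d'_def
          by (rule sum_upd_in) (use finX True w X'_def in auto)
        show ?thesis using sY' sX' sXx SYsplit wX[OF True] w(4) SX_def by linarith
      next
        case False
        have wY: "w \<in> Y - {y}" using False w Y_def by auto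
        have sX': "sum d' X' = sum d X'" unfolding d'_def
          by (rule sum_upd_out) (use False X'_def in auto)
        have sY': "sum d' (V' - X') + d w = sum d (Y - {y}) + (d w - 1)" unfolding d'_def YV'
          by (rule sum_upd_in) (use finY wY in auto)
        show ?thesis using sY' sX' sXx SYsplit w(4) SX_def sc' by linarith
      qed
      have sV'0: "sum d V = sum d V' + 3"
      proof -
        have "sum d V = sum d (V - {x,y}) + sum d {x,y}" by (rule sum.subset_diff[OF sub fin])
        moreover have "sum d {x,y} = 3" using xy x y by simp
        ultimately show ?thesis using V'_def by simp
      qed
      have sV': "sum d' V' + d w = sum d V' + (d w - 1)" unfolding d'_def
        by (rule sum_upd_in[OF h1 wV'])
      have h7: "sum d' V' + 2 = 2 * card V'" using sV' sV'0 tot n_def cV' w(4) by linarith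
      have "card V' < card V" using cV' n_def by simp
      from less.hyps[OF this h1 h2 h3 h4 h5 h6 h7] obtain E f where G: "good V' X' d' E f" by blast
      have xV': "x \<notin> V'" and yV': "y \<notin> V'" using V'_def by auto
      note G2 = ext_pair[OF G wV' xV' yV' xy]
      have "insert y (insert x V') = V" using yV xV V'_def by auto
      moreover have "insert x X' = X" using x X'_def by auto
      moreover have "\<And>v. v \<in> V \<Longrightarrow> (d'(w := d' w + 1, x := 2, y := 1)) v = d v"
        using y x w xy d'_def by auto
      ultimately show ?thesis using good_cong[OF G2] by metis
    qed
    show ?thesis
    proof (cases "\<exists>x\<in>X. (d x \<ge> 3 \<or> n = 3) \<and> k < m")
      case True then show ?thesis using case1 by blast
    next
      case False
      have "SX \<ge> 1" using sc' SYm kc' nkm n3 by linarith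
      then have Xne: "X \<noteq> {}" unfolding SX_def by auto
      then obtain x0 where x0: "x0 \<in> X" by blast
      have n4: "n \<noteq> 3"
      proof
        assume "n = 3"
        then have "k < m" using kc' nkm by presburger
        then show False using False x0 \<open>n = 3\<close> by blast
      qed
      have "\<exists>x\<in>X. d x = 2"
      proof (rule ccontr)
        assume A: "\<not> (\<exists>x\<in>X. d x = 2)"
        have "\<forall>x\<in>X. d x \<ge> 3"
        proof
          fix x assume "x \<in> X"
          then have "d x \<ge> 2" "d x \<noteq> 2" using dX A by auto
          then show "d x \<ge> 3" by linarith
        qed
        then have "sum (\<lambda>_. 3::nat) X \<le> sum d X" by (intro sum_mono) auto
        then have "SX \<ge> 3 * k" unfolding SX_def k_def by simp
        then have "k < m" using tot' SYm nkm kc' by linarith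
        then show False using False x0 \<open>\<forall>x\<in>X. d x \<ge> 3\<close> by blast
      qed
      then obtain x where x: "x \<in> X" "d x = 2" by blast
      show ?thesis
      proof (cases "\<exists>w\<in>Y. d w \<ge> 2")
        case True
        then obtain w where w: "w \<in> Y" "d w \<ge> 2" by blast
        have "w \<in> V" "w \<noteq> x" "w \<noteq> y" using w x y Y_def by auto
        then show ?thesis using caseP[OF x _ _ _ w(2)] w Y_def by auto
      next
        case False2: False
        have Y1: "\<forall>w\<in>Y. d w = 1"
        proof
          fix w assume "w \<in> Y"
          then have "d w \<ge> 1" "\<not> d w \<ge> 2" using d1 False2 Y_def by auto
          then show "d w = 1" by linarith
        qed
        have "SY = sum (\<lambda>_. 1::nat) Y" unfolding SY_def by (rule sum.cong) (use Y1 in auto)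
        then have SYm': "SY = m" by (simp add: m_def)
        have k2: "k \<ge> 2"
        proof (rule ccontr)
          assume "\<not> k \<ge> 2"
          then have "card (X - {x}) = 0" using card_rm[OF finX x(1)] k_def by simp
          then have "X - {x} = {}" using finX by simp
          then have "X = {x}" using x by blast
          then have "SX = 2" using x SX_def by simp
          then show False using tot' SYm' nkm n4 \<open>X = {x}\<close> k_def by simp
        qed
        have SXY: "SY + 2 \<le> SX" using tot' SYm' nkm k2 by linarith
        have "card (X - {x}) \<ge> 1" using card_rm[OF finX x(1)] k_def k2 by simp
        then have "X - {x} \<noteq> {}" by (intro notI) simp
        then obtain w0 where w0: "w0 \<in> X" "w0 \<noteq> x" by blast
        show ?thesis
        proof (cases "\<exists>w\<in>X - {x}. d w \<ge> 3")
          case True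
          then obtain w where w: "w \<in> X" "w \<noteq> x" "d w \<ge> 3" by blast
          have "w \<in> V" "w \<noteq> y" "d w \<ge> 2" using w XV yV by auto
          then show ?thesis using caseP[OF x, of w] w SXY by auto
        next
          case False3: False
          have X2: "\<forall>w\<in>X. d w = 2"
          proof
            fix w assume "w \<in> X"
            then show "d w = 2" using False3 dX[of w] x by (cases "w = x") force+
          qed
          have "SX = sum (\<lambda>_. 2::nat) X" unfolding SX_def by (rule sum.cong) (use X2 in auto)
          then have "SX = 2 * k" by (simp add: k_def)
          then have n4': "n = 4" using tot' SYm' nkm kc' k2 by linarith
          have "w0 \<in> V" "w0 \<noteq> y" "d w0 \<ge> 2" using w0 XV yV X2 by auto
          then show ?thesis using caseP[OF x, of w0] w0 SXY n4' by auto
        qed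
      qed
    qed
  qed
qed




lemma good_min_cover:
  assumes G: "good V X d E f"
  shows "min_vertex_cover V E X"
proof -
  have T: "is_tree V E" and XV: "X \<subseteq> V" and cov: "\<forall>e\<in>E. e \<inter> X \<noteq> {}"
    and inj: "inj_on f X" and fm: "\<forall>x\<in>X. f x \<in> V - X \<and> {x, f x} \<in> E"
    using G by (auto simp: good_def)
  have vc: "vertex_cover V E X" using XV cov by (simp add: vertex_cover_def)
  have "card X \<le> card Y" if Y: "vertex_cover V E Y" for Y
  proof -
    have YV: "Y \<subseteq> V" and Ycov: "\<forall>e\<in>E. e \<inter> Y \<noteq> {}" using Y by (auto simp: vertex_cover_def)
    have finY: "finite Y" using YV T finite_subset by (auto simp: is_tree_def simple_graph_def)
    define g where "g x = (if x \<in> Y then x else f x)" for x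
    have gY: "g ` X \<subseteq> Y"
    proof
      fix z assume "z \<in> g ` X"
      then obtain x where x: "x \<in> X" "z = g x" by blast
      have "{x, f x} \<inter> Y \<noteq> {}" using Ycov fm x by blast
      then show "z \<in> Y" using x by (auto simp: g_def)
    qed
    have "inj_on g X"
    proof (rule inj_onI)
      fix a b assume ab: "a \<in> X" "b \<in> X" "g a = g b"
      show "a = b"
      proof (cases "a \<in> Y")
        case True
        show ?thesis
        proof (cases "b \<in> Y")
          case True then show ?thesis using ab \<open>a \<in> Y\<close> by (simp add: g_def)
        next
          case False then have "a = f b" using ab \<open>a \<in> Y\<close> by (simp add: g_def)
          then show ?thesis using fm ab by auto
        qed
      next
        case False
        show ?thesis
        proof (cases "b \<in> Y")
          case True then have "b = f a" using ab False by (simp add: g_def)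
          then show ?thesis using fm ab by auto
        next
          case False2: False then have "f a = f b" using ab False by (simp add: g_def)
          then show ?thesis using inj ab by (simp add: inj_on_def)
        qed
      qed
    qed
    then show ?thesis using card_inj_on_le[OF _ gY finY] by simp
  qed
  then show ?thesis using vc by (simp add: min_vertex_cover_def)
qed

theorem lemma2:
  fixes n :: nat and d :: "nat \<Rightarrow> nat" and X :: "nat set"
  assumes "tree_degree_seq n d"
    and "n \<ge> 3"
    and "X \<subseteq> {1..n}"
    and "\<forall>i\<in>X. d i > 1"
    and "2 * card X \<le> n"
    and "(\<Sum>i\<in>X. d i) \<ge> (\<Sum>i\<in>{1..n} - X. d i)"
  shows "\<exists>E. is_tree {1..n} E \<and> (\<forall>i\<in>{1..n}. degree E i = d i) \<and> min_vertex_cover {1..n} E X"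
proof -
  obtain E0 where E0: "is_tree {1..n} E0" "\<forall>i\<in>{1..n}. degree E0 i = d i"
    using assms(1) by (auto simp: tree_degree_seq_def)
  have cV: "card {1..n} = n" by simp
  have d1: "\<forall>v\<in>{1..n}. d v \<ge> 1" using degree_pos[OF E0(1)] E0(2) cV assms(2) by auto
  have d2: "\<forall>x\<in>X. d x \<ge> 2 \<or> card {1..n} = 2" using assms(4) by auto
  have finX: "finite X" using assms(3) finite_subset by blast
  have "card ({1..n} - X) = n - card X" using card_Diff_subset[OF finX assms(3)] by simp
  then have kc: "card X \<le> card ({1..n} - X)" using assms(5) by simp
  have "sum (degree E0) {1..n} = sum d {1..n}" using E0(2) by (intro sum.cong) auto
  then have tot: "sum d {1..n} + 2 = 2 * card {1..n}" using tree_degree_sum[OF E0(1)] by simp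
  obtain E f where G: "good {1..n} X d E f"
    using main[OF _ assms(3) d1 d2 kc assms(6) tot] by auto
  have "is_tree {1..n} E" "\<forall>i\<in>{1..n}. degree E i = d i" using G by (auto simp: good_def)
  then show ?thesis using good_min_cover[OF G] by blast
qed


end
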